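(* Let $G=(V,E,\{c_e\}_{e\in E})$ be a finite undirected graph with positive conductances and arbitrarily oriented edges. Let $h\in\mathbb{R}^V_{>0}$ and $w\in\mathbb{R}^E_{\ge0}$. Then $$\left(w^\top C^{1/2}|Bh|\right)^2\le\frac{\mathcal{I}(h)}{2}\sum_{x\in V}h(x)\sum_{e:\,x\in e}w_e^2,$$ where $|Bh|$ denotes the coordinatewise absolute value of $Bh$ and $$\mathcal{I}(h):=h^\top L\log h=\sum_{xy\in E}c_{xy}\big(h(x)-h(y)\big)\big(\log h(x)-\log h(y)\big),$$ with $\log h$ taken coordinatewise.
   Context: For a vertex $v$, $\mathbbm{1}_v\in\mathbb{R}^V$ is the standard basis vector. For an edge $e$ oriented from $e^-$ to $e^+$, $b_e:=\mathbbm{1}_{e^+}-\mathbbm{1}_{e^-}$; $B\in\mathbb{R}^{E\times V}$ is the matrix with row $b_e^\top$ for each $e$. $C=\operatorname{diag}(c_e)$, $L:=B^\top CB$. Graphs have no self-loops. *)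

theory Defs
  imports Main "HOL-Analysis.Analysis"
begin

text \<open>A finite graph: vertex set V, edge set E (edges are abstract objects, so
parallel edges are allowed); each edge e is oriented from src e (= e^-) to tgt e (= e^+).\<close>

definition graph_ok :: "'v set \<Rightarrow> 'e set \<Rightarrow> ('e \<Rightarrow> 'v) \<Rightarrow> ('e \<Rightarrow> 'v) \<Rightarrow> bool" where
  "graph_ok V E src tgt \<longleftrightarrow> finite V \<and> finite E \<and>
     (\<forall>e\<in>E. src e \<in> V \<and> tgt e \<in> V \<and> src e \<noteq> tgt e)"

definition incB :: "('e \<Rightarrow> 'v) \<Rightarrow> ('e \<Rightarrow> 'v) \<Rightarrow> ('v \<Rightarrow> real) \<Rightarrow> 'e \<Rightarrow> real" where
  "incB src tgt f e = f (tgt e) - f (src e)"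

definition entI :: "'e set \<Rightarrow> ('e \<Rightarrow> 'v) \<Rightarrow> ('e \<Rightarrow> 'v) \<Rightarrow> ('e \<Rightarrow> real) \<Rightarrow> ('v \<Rightarrow> real) \<Rightarrow> real" where
  "entI E src tgt c h = (\<Sum>e\<in>E. incB src tgt h e * c e * incB src tgt (\<lambda>x. ln (h x)) e)"

end

theory Submission imports Defs begin

lemma ln_lower: fixes t :: real assumes "1 \<le> t" shows "2 * (t - 1) / (t + 1) \<le> ln t"
proof -
  let ?f = "\<lambda>x::real. ln x - 2 * (x - 1) / (x + 1)"
  have "?f 1 \<le> ?f t"
  proof (rule DERIV_nonneg_imp_increasing_open[OF assms])
    fix x :: real assume x: "1 < x" "x < t"
    have d: "DERIV ?f x :> (1/x - (2 * (x+1) - 2*(x-1)) / (x+1)^2)"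
      using x by (auto intro!: derivative_eq_intros simp: power2_eq_square field_simps)
    have "1/x - (2 * (x+1) - 2*(x-1)) / (x+1)^2 = (x-1)^2 / (x * (x+1)^2)"
      using x by (simp add: divide_simps) (simp add: power2_eq_square algebra_simps)
    also have "\<dots> \<ge> 0" using x by simp
    finally show "\<exists>y. DERIV ?f x :> y \<and> y \<ge> 0" using d by auto
  next
    show "continuous_on {1..t} ?f"
      by (auto intro!: continuous_intros)
  qed
  then show ?thesis by simp
qed

lemma edge_ineq: fixes a b :: real assumes "0 < a" "0 < b"
  shows "(a - b)^2 \<le> (a - b) * (ln a - ln b) * ((a + b) / 2)"
proof -
  have main: "(a - b)^2 \<le> (a - b) * (ln a - ln b) * ((a + b) / 2)" if "0<b" "b \<le> a" for a b :: real
  proof -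
    have t: "1 \<le> a / b" using that by simp
    have "2 * (a/b - 1) / (a/b + 1) \<le> ln (a/b)" by (rule ln_lower[OF t])
    also have "ln (a/b) = ln a - ln b" using that by (simp add: ln_div)
    moreover have "2 * (a/b - 1) / (a/b + 1) = 2 * (a - b) / (a + b)" using that
      by (simp add: divide_simps)
    ultimately have "2 * (a - b) / (a + b) \<le> ln a - ln b" by simp
    hence "2 * (a - b) \<le> (ln a - ln b) * (a + b)" using that by (simp add: field_simps)
    hence "(a - b) * (2 * (a - b)) \<le> (a - b) * ((ln a - ln b) * (a + b))"
      using that by (intro mult_left_mono) auto
    moreover have "(a-b)*(ln a - ln b)*((a+b)/2)*2 = (a-b)*((ln a - ln b)*(a+b))" by simp
    moreover have "(a-b)^2*2 = (a-b)*(2*(a-b))" by (simp add: power2_eq_square)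
    ultimately show ?thesis by linarith
  qed
  show ?thesis
  proof (cases "b \<le> a")
    case True thus ?thesis using main assms by blast
  next
    case False
    hence "(b - a)^2 \<le> (b - a) * (ln b - ln a) * ((b + a) / 2)" using main assms by auto
    thus ?thesis by (simp add: power2_eq_square algebra_simps)
  qed
qed
theorem lemma3p1:
  fixes V :: "'v set" and E :: "'e set" and src tgt :: "'e \<Rightarrow> 'v"
    and c :: "'e \<Rightarrow> real" and h :: "'v \<Rightarrow> real" and w :: "'e \<Rightarrow> real"
  assumes "graph_ok V E src tgt"
    and "\<forall>e\<in>E. c e > 0"
    and "\<forall>x\<in>V. h x > 0"
    and "\<forall>e\<in>E. w e \<ge> 0"
  shows "(\<Sum>e\<in>E. w e * (sqrt (c e) * \<bar>incB src tgt h e\<bar>))\<^sup>2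
         \<le> entI E src tgt c h / 2 *
            (\<Sum>x\<in>V. h x * (\<Sum>e\<in>{e\<in>E. x = src e \<or> x = tgt e}. (w e)\<^sup>2))"
proof -
  define d where "d e = incB src tgt h e" for e
  define l where "l e = incB src tgt (\<lambda>x. ln (h x)) e" for e
  define s where "s e = h (src e) + h (tgt e)" for e
  define u where "u e = sqrt (c e * d e * l e)" for e
  define v where "v e = w e * sqrt (s e / 2)" for e
  have fin: "finite V" "finite E" using assms(1) unfolding graph_ok_def by auto
  have ev: "src e \<in> V" "tgt e \<in> V" "src e \<noteq> tgt e" if "e \<in> E" for e
    using assms(1) that unfolding graph_ok_def by auto
  have spos: "s e > 0" if "e \<in> E" for e using ev[OF that] assms(3) unfolding s_def
    by (simp add: add_pos_pos)
  have key: "(d e)^2 \<le> d e * l e * (s e / 2)" if "e \<in> E" for e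
    using edge_ineq[of "h (tgt e)" "h (src e)"] ev[OF that] assms(3)
    unfolding d_def l_def s_def incB_def by (simp add: add.commute)
  have dl: "d e * l e \<ge> 0" if "e \<in> E" for e
  proof (rule ccontr)
    assume "\<not> ?thesis"
    hence "d e * l e * (s e / 2) < 0" using spos[OF that] by (simp add: mult_neg_pos)
    with key[OF that] show False by (smt (verit) zero_le_power2)
  qed
  have pt: "w e * (sqrt (c e) * \<bar>d e\<bar>) \<le> u e * v e" if "e \<in> E" for e
  proof -
    have c0: "c e > 0" using assms(2) that by auto
    have "sqrt (c e) * \<bar>d e\<bar> = sqrt (c e * (d e)^2)" by (simp add: real_sqrt_mult)
    also have "\<dots> \<le> sqrt (c e * (d e * l e * (s e / 2)))"
      using key[OF that] c0 by (intro real_sqrt_le_mono mult_left_mono) auto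
    also have "\<dots> = u e * sqrt (s e / 2)" unfolding u_def
      by (simp add: real_sqrt_mult[symmetric] mult.assoc)
    finally show ?thesis unfolding v_def using assms(4) that
      by (metis mult.left_commute mult_left_mono)
  qed
  have lhs0: "0 \<le> (\<Sum>e\<in>E. w e * (sqrt (c e) * \<bar>d e\<bar>))"
    using assms(2,4) by (intro sum_nonneg) (auto simp: less_imp_le)
  have "(\<Sum>e\<in>E. w e * (sqrt (c e) * \<bar>d e\<bar>))\<^sup>2 \<le> (\<Sum>e\<in>E. u e * v e)\<^sup>2"
    using lhs0 pt by (intro power_mono sum_mono) auto
  also have "\<dots> \<le> (\<Sum>e\<in>E. (u e)\<^sup>2) * (\<Sum>e\<in>E. (v e)\<^sup>2)"
    by (rule Cauchy_Schwarz_ineq_sum)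
  also have "(\<Sum>e\<in>E. (u e)\<^sup>2) = entI E src tgt c h"
    unfolding entI_def
  proof (rule sum.cong)
    fix e assume e: "e \<in> E"
    have "c e * d e * l e \<ge> 0" using dl[OF e] assms(2) e
      by (metis mult.assoc less_le zero_le_mult_iff)
    thus "(u e)\<^sup>2 = incB src tgt h e * c e * incB src tgt (\<lambda>x. ln (h x)) e"
      unfolding u_def d_def l_def by simp
  qed simp
  also have "(\<Sum>e\<in>E. (v e)\<^sup>2) = (\<Sum>x\<in>V. h x * (\<Sum>e\<in>{e\<in>E. x = src e \<or> x = tgt e}. (w e)\<^sup>2)) / 2"
  proof -
    have "(\<Sum>x\<in>V. h x * (\<Sum>e\<in>{e\<in>E. x = src e \<or> x = tgt e}. (w e)\<^sup>2))
        = (\<Sum>x\<in>V. \<Sum>e\<in>E. if x = src e \<or> x = tgt e then h x * (w e)\<^sup>2 else 0)"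
      using fin by (simp add: sum_distrib_left sum.If_cases Int_def conj_commute)
    also have "\<dots> = (\<Sum>e\<in>E. \<Sum>x\<in>V. if x = src e \<or> x = tgt e then h x * (w e)\<^sup>2 else 0)"
      by (rule sum.swap)
    also have "\<dots> = (\<Sum>e\<in>E. s e * (w e)\<^sup>2)"
    proof (rule sum.cong)
      fix e assume e: "e \<in> E"
      have "(\<Sum>x\<in>V. if x = src e \<or> x = tgt e then h x * (w e)\<^sup>2 else 0)
          = (\<Sum>x\<in>{x\<in>V. x = src e \<or> x = tgt e}. h x * (w e)\<^sup>2)"
        using fin by (simp add: sum.If_cases Int_def)
      also have "{x\<in>V. x = src e \<or> x = tgt e} = {src e, tgt e}" using ev[OF e] by auto
      also have "(\<Sum>x\<in>{src e, tgt e}. h x * (w e)\<^sup>2) = s e * (w e)\<^sup>2"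
        using ev[OF e] unfolding s_def by (simp add: algebra_simps)
      finally show "(\<Sum>x\<in>V. if x = src e \<or> x = tgt e then h x * (w e)\<^sup>2 else 0) = s e * (w e)\<^sup>2" .
    qed simp
    finally have eq: "(\<Sum>x\<in>V. h x * (\<Sum>e\<in>{e\<in>E. x = src e \<or> x = tgt e}. (w e)\<^sup>2)) = (\<Sum>e\<in>E. s e * (w e)\<^sup>2)" .
    have "(\<Sum>e\<in>E. (v e)\<^sup>2) = (\<Sum>e\<in>E. s e * (w e)\<^sup>2 / 2)"
    proof (rule sum.cong)
      fix e assume e: "e \<in> E"
      show "(v e)\<^sup>2 = s e * (w e)\<^sup>2 / 2" unfolding v_def using spos[OF e]
        by (simp add: power_mult_distrib)
    qed simp
    also have "\<dots> = (\<Sum>e\<in>E. s e * (w e)\<^sup>2) / 2" by (simp add: sum_divide_distrib)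
    finally show ?thesis using eq by simp
  qed
  finally show ?thesis unfolding d_def by simp
qed
end
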